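(* Let $p\in(0,1)$, $q=1-p$, and let $X_1$ be a random variable with ${\sf P}(X_1=\sqrt{q/p})=p$, ${\sf P}(X_1=-\sqrt{p/q})=q$. Let $\Phi$ be the standard normal distribution function. Then $$\Delta_1(p):=\sup_{x\in\mathbb R}\big|{\sf P}(X_1<x)-\Phi(x)\big|=\begin{cases}\Phi(\sqrt{p/q})-p,&0<p<\frac12,\\ \Phi(\sqrt{q/p})-q,&\frac12\le p<1.\end{cases}$$ *)

theory Defs
  imports "HOL-Probability.Probability"
begin

definition Phi :: "real \<Rightarrow> real" where
  "Phi x = cdf (density lborel std_normal_density) x"

end

theory Submission
  imports Defs
begin

abbreviation "NN \<equiv> density lborel std_normal_density"

lemma NN_rd: "real_distribution NN"
  unfolding real_distribution_def real_distribution_axioms_def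
  using prob_space_normal_density by simp

lemma phi_cont: "continuous_on S std_normal_density"
  unfolding normal_density_def by (intro continuous_intros) auto

lemma Phi_diff_lt:
  assumes "x < y"
  shows "Phi y - Phi x = integral {x..y} std_normal_density"
proof -
  interpret real_distribution NN by (rule NN_rd)
  have int: "(std_normal_density has_integral integral {x..y} std_normal_density) {x..y}"
    by (intro integrable_integral integrable_continuous_interval phi_cont)
  have int2: "(std_normal_density has_integral integral {x..y} std_normal_density) {x<..y}"
  proof (subst has_integral_spike_set_eq[where T="{x..y}"])
    show "negligible {s \<in> {x<..y} - {x..y}. std_normal_density s \<noteq> 0}"
      by (rule negligible_subset[OF negligible_empty]) auto
    show "negligible {s \<in> {x..y} - {x<..y}. std_normal_density s \<noteq> 0}"
      by (rule negligible_subset[OF negligible_sing[of x]]) auto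
  qed (rule int)
  have "emeasure NN {x<..y} = (\<integral>\<^sup>+ s. ennreal (std_normal_density s) * indicator {x<..y} s \<partial>lborel)"
    by (simp add: emeasure_density)
  also have "\<dots> = ennreal (integral {x..y} std_normal_density)"
    by (rule nn_integral_has_integral_lebesgue'[OF _ int2]) simp
  finally have "measure NN {x<..y} = integral {x..y} std_normal_density"
    using has_integral_nonneg[OF int] by (simp add: measure_def)
  then show ?thesis using cdf_diff_eq[OF assms] unfolding Phi_def by simp
qed

lemma Phi_diff:
  assumes "x \<le> y"
  shows "(std_normal_density has_integral (Phi y - Phi x)) {x..y}"
proof (cases "x < y")
  case True
  then show ?thesis using Phi_diff_lt[OF True]
    by (metis integrable_integral integrable_continuous_interval phi_cont)
next
  case False
  then have "x = y" using assms by simp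
  then show ?thesis using has_integral_refl(2)[of std_normal_density y] by simp
qed

lemma phi_le1: "std_normal_density s \<le> 1"
proof -
  have "sqrt (2*pi) \<ge> 1" using pi_gt3 by simp
  then have "1 / sqrt (2*pi) \<le> 1" by simp
  moreover have "exp (- s\<^sup>2 / 2) \<le> 1" by simp
  ultimately show ?thesis unfolding std_normal_density_def
    by (meson exp_ge_zero mult_le_one zero_le_divide_1_iff real_sqrt_ge_zero pi_ge_zero mult_nonneg_nonneg zero_le_numeral)
qed

lemma Phi_mono: "x \<le> y \<Longrightarrow> Phi x \<le> Phi y"
  using has_integral_nonneg[OF Phi_diff] by fastforce

lemma Phi_lip: "x \<le> y \<Longrightarrow> Phi y - Phi x \<le> y - x"
proof -
  assume a: "x \<le> y"
  have "((\<lambda>_. 1::real) has_integral (y - x)) {x..y}"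
    using has_integral_const_real[of "1::real" x y] a by simp
  then show ?thesis using has_integral_le[OF Phi_diff[OF a]] phi_le1 by blast
qed

lemma Phi_cont: "continuous_on UNIV Phi"
proof (rule lipschitz_on_continuous_on)
  show "1-lipschitz_on UNIV Phi"
  proof (rule lipschitz_onI)
    fix x y :: real
    show "dist (Phi x) (Phi y) \<le> 1 * dist x y"
      using Phi_lip[of x y] Phi_lip[of y x] Phi_mono[of x y] Phi_mono[of y x]
      by (cases "x \<le> y") (auto simp: dist_real_def)
  qed simp
qed

lemma Phi_isCont: "isCont Phi x"
  using Phi_cont by (simp add: continuous_on_eq_continuous_at)

lemma Phi_sym: "Phi (-x) = 1 - Phi x"
proof -
  interpret real_distribution NN by (rule NN_rd)
  define g where "g x = Phi x + Phi (-x)" for x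
  have step: "g y = g x" if "x \<le> y" for x y
  proof -
    have "(std_normal_density has_integral (Phi (-x) - Phi (-y))) {-y..-x}"
      using Phi_diff[of "-y" "-x"] that by simp
    then have "((\<lambda>s. std_normal_density (-s)) has_integral (Phi (-x) - Phi (-y))) {x..y}"
      using has_integral_reflect_real[where f=std_normal_density and a="-y" and b="-x"] by simp
    moreover have "(\<lambda>s. std_normal_density (-s)) = std_normal_density"
      by (rule ext) (simp add: std_normal_density_def)
    ultimately have "Phi (-x) - Phi (-y) = Phi y - Phi x"
      using Phi_diff[OF that] has_integral_unique by metis
    then show ?thesis unfolding g_def by simp
  qed
  have const: "g x = g 0" for x
  proof (cases "x \<le> 0")
    case True then show ?thesis using step[of x 0] by simp
  next
    case False then show ?thesis using step[of 0 x] by simp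
  qed
  have "(Phi \<longlongrightarrow> 1) at_top" using cdf_lim_at_top_prob unfolding Phi_def[abs_def] by simp
  moreover have "((\<lambda>x. Phi (-x)) \<longlongrightarrow> 0) at_top"
  proof -
    have "(Phi \<longlongrightarrow> 0) at_bot" using cdf_lim_at_bot unfolding Phi_def[abs_def] by simp
    then show ?thesis by (rule filterlim_compose) (rule filterlim_uminus_at_bot_at_top)
  qed
  ultimately have "(g \<longlongrightarrow> 1 + 0) at_top" unfolding g_def[abs_def] by (rule tendsto_add)
  moreover have "(g \<longlongrightarrow> g 0) at_top"
  proof -
    have "g = (\<lambda>_. g 0)" using const by (intro ext) 
    then show ?thesis by (metis tendsto_const)
  qed
  ultimately have "g 0 = 1 + 0" using tendsto_unique[OF trivial_limit_at_top_linorder] by blast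
  then show ?thesis using const[of x] unfolding g_def by simp
qed

lemma sqrt2pi_ge: "5/2 \<le> sqrt (2*pi)"
  by (rule real_le_rsqrt) (use pi_approx in \<open>simp add: power2_eq_square\<close>)

lemma sqrt2pi_le: "sqrt (2*pi) \<le> 10/3"
proof -
  have "sqrt (2*pi) \<le> sqrt ((10/3)^2)"
    by (subst real_sqrt_le_iff) (use pi_approx in \<open>simp add: power2_eq_square\<close>)
  then show ?thesis by simp
qed

lemma phi_upper: "std_normal_density s \<le> (11/20) / (1 + s\<^sup>2)"
proof -
  define u where "u = s\<^sup>2 / 2"
  have u0: "0 \<le> u" unfolding u_def by simp
  have e: "(1 + u/2)^2 \<le> exp u"
    using exp_ge_one_plus_x_over_n_power_n[of 2 u] u0 by simp
  have poly: "1 + 2*u \<le> 11/8 * (1 + u/2)^2"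
  proof -
    have "11*(u-10/11)^2 = 11*u^2 - 20*u + 100/11" by (simp add: power2_eq_square field_simps)
    moreover have "0 \<le> 11*(u - 10/11)^2" by simp
    moreover have "(1+u/2)^2 = 1 + u + u^2/4" by (simp add: power2_eq_square field_simps)
    ultimately show ?thesis by linarith
  qed
  have "1 + 2*u \<le> (11/20) * sqrt (2*pi) * exp u"
  proof -
    have "11/8 * exp u \<le> (11/20) * sqrt (2*pi) * exp u"
      using sqrt2pi_ge by (intro mult_right_mono) auto
    then show ?thesis using poly e by linarith
  qed
  then have "(1 + s\<^sup>2) \<le> (11/20) * sqrt (2*pi) * exp (s\<^sup>2/2)" unfolding u_def by simp
  then have "(1 + s\<^sup>2) * exp (- s\<^sup>2/2) / sqrt (2*pi) \<le> 11/20"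
    by (simp add: field_simps exp_minus)
  then show ?thesis unfolding std_normal_density_def
    by (simp add: field_simps add_pos_nonneg)
qed

lemma phi_lower: "(3/10) * (1 - s\<^sup>2/2) \<le> std_normal_density s"
proof (cases "s\<^sup>2 \<le> 2")
  case False
  then have "(3/10) * (1 - s\<^sup>2/2) \<le> 0" by simp
  then show ?thesis using normal_density_nonneg[of 0 1 s] by linarith
next
  case True
  have e: "1 - s\<^sup>2/2 \<le> exp (- s\<^sup>2/2)" using exp_ge_add_one_self[of "- s\<^sup>2/2"] by simp
  have k: "3/10 \<le> 1 / sqrt (2*pi)" using sqrt2pi_le by (simp add: field_simps)
  have "(3/10) * (1 - s\<^sup>2/2) \<le> (1 / sqrt (2*pi)) * (1 - s\<^sup>2/2)"
    using k True by (intro mult_right_mono) auto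
  also have "\<dots> \<le> (1 / sqrt (2*pi)) * exp (- s\<^sup>2/2)"
    using e by (intro mult_left_mono) auto
  finally show ?thesis unfolding std_normal_density_def .
qed

lemma sin_lower: fixes a :: real assumes "0 \<le> a" shows "a - a^3/6 \<le> sin a"
proof -
  have se: "(\<Sum>m<3. sin_coeff m * a ^ m) = a"
    by (simp add: sin_coeff_def eval_nat_numeral)
  have "\<bar>sin a - (\<Sum>m<3. sin_coeff m * a ^ m)\<bar> \<le> inverse (fact 3) * \<bar>a\<bar> ^ 3"
    by (rule Maclaurin_sin_bound)
  then have "\<bar>sin a - a\<bar> \<le> inverse (fact 3) * \<bar>a\<bar> ^ 3" unfolding se .
  then have "\<bar>sin a - a\<bar> \<le> a^3/6" using assms by (simp add: fact_numeral)
  moreover have "a - sin a \<le> \<bar>sin a - a\<bar>" by (simp add: abs_if)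
  ultimately show ?thesis by linarith
qed

lemma L1:
  assumes "0 < t" "t \<le> 1"
  shows "Phi (1/t) - Phi t \<le> (1 - t\<^sup>2) / (1 + t\<^sup>2)"
proof -
  have tle: "t \<le> 1/t" using assms by (simp add: field_simps) (metis mult_le_one less_imp_le)
  have I1: "((\<lambda>s. (11/20) * inverse (1 + s\<^sup>2)) has_integral
       ((11/20) * arctan (1/t) - (11/20) * arctan t)) {t..1/t}"
  proof (rule fundamental_theorem_of_calculus[OF tle])
    fix x :: real
    have "((\<lambda>x. 11/20 * arctan x) has_real_derivative 11/20 * inverse (1 + x\<^sup>2)) (at x)"
      by (intro DERIV_cmult DERIV_arctan)
    then show "((\<lambda>x. 11/20 * arctan x) has_vector_derivative 11/20 * inverse (1 + x\<^sup>2)) (at x within {t..1/t})"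
      unfolding has_real_derivative_iff_has_vector_derivative[symmetric] by (rule has_field_derivative_at_within)
  qed
  have le: "Phi (1/t) - Phi t \<le> (11/20) * arctan (1/t) - (11/20) * arctan t"
  proof (rule has_integral_le[OF Phi_diff[OF tle] I1])
    fix x show "std_normal_density x \<le> 11/20 * inverse (1 + x\<^sup>2)"
      using phi_upper[of x] by (simp only: divide_inverse)
  qed
  have at0: "arctan (inverse t) = pi/2 - arctan t" by (rule arctan_inverse) (use assms in simp)
  then have at: "arctan (1/t) = pi/2 - arctan t" by (simp add: inverse_eq_divide)
  define th where "th = arctan t"
  have th0: "0 \<le> th" unfolding th_def using assms arctan_le_iff[of 0 t] by simp
  have th1: "th \<le> pi/4" unfolding th_def using assms arctan_le_iff[of t 1] arctan_one by simp
  define al where "al = pi/2 - 2*th"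
  have al0: "0 \<le> al" and al1: "al \<le> 8/5" using th0 th1 pi_approx unfolding al_def by auto
  have "sin al = cos (2*th)" unfolding al_def by (simp add: cos_sin_eq)
  also have "\<dots> = (cos th)\<^sup>2 - (sin th)\<^sup>2" by (rule cos_double)
  also have "\<dots> = 1/(1+t\<^sup>2) - t\<^sup>2/(1+t\<^sup>2)"
    unfolding th_def cos_arctan sin_arctan by (simp add: power_divide add_pos_nonneg)
  also have "\<dots> = (1 - t\<^sup>2) / (1 + t\<^sup>2)" by (simp add: diff_divide_distrib)
  finally have sa: "sin al = (1 - t\<^sup>2) / (1 + t\<^sup>2)" .
  have "al^2 \<le> (8/5)^2" using al0 al1 by (intro power_mono) auto
  then have "al * al^2 \<le> al * (8/5)^2" using al0 by (intro mult_left_mono) auto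
  moreover have "al^3 = al * al^2" by (simp add: power3_eq_cube power2_eq_square)
  ultimately have "al^3 \<le> 64/25 * al" by (simp add: power2_eq_square)
  then have "(11/20) * al \<le> al - al^3/6" using al0 by linarith
  also have "\<dots> \<le> sin al" by (rule sin_lower[OF al0])
  finally have "(11/20) * al \<le> (1 - t\<^sup>2) / (1 + t\<^sup>2)" using sa by simp
  moreover have "(11/20) * arctan (1/t) - (11/20) * arctan t = (11/20) * al"
    unfolding al_def th_def at by (simp add: right_diff_distrib)
  ultimately show ?thesis using le by linarith
qed

lemma L2:
  assumes "0 < t" "t \<le> 1"
  shows "t\<^sup>2 / (1 + t\<^sup>2) \<le> 2 * Phi t - 1"
proof -
  define F where "F s = (3/10) * (s - s^3/6)" for s :: real
  have tle: "-t \<le> t" using assms by simp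
  have I: "((\<lambda>s. (3/10) * (1 - s\<^sup>2/2)) has_integral (F t - F (-t))) {-t..t}"
  proof (rule fundamental_theorem_of_calculus[OF tle])
    fix x :: real
    have "(F has_real_derivative (3/10) * (1 - x\<^sup>2/2)) (at x)"
      unfolding F_def[abs_def] by (auto intro!: derivative_eq_intros simp: eval_nat_numeral field_simps)
    then show "(F has_vector_derivative (3/10) * (1 - x\<^sup>2/2)) (at x within {-t..t})"
      unfolding has_real_derivative_iff_has_vector_derivative[symmetric] by (rule has_field_derivative_at_within)
  qed
  have le: "F t - F (-t) \<le> Phi t - Phi (-t)"
    by (rule has_integral_le[OF I Phi_diff[OF tle]]) (use phi_lower in simp)
  have "t^3 \<le> t" using assms by (simp add: eval_nat_numeral) (metis mult_le_one less_imp_le mult_le_cancel_left1 mult.assoc)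
  then have "t/2 \<le> F t - F (-t)" unfolding F_def by (simp add: eval_nat_numeral field_simps)
  moreover have "t\<^sup>2 / (1 + t\<^sup>2) \<le> t/2"
  proof -
    have "0 \<le> t * (1-t)^2" using assms by simp
    then have "2*t\<^sup>2 \<le> t * (1 + t\<^sup>2)" by (simp add: power2_eq_square algebra_simps)
    then show ?thesis by (simp add: field_simps add_pos_nonneg)
  qed
  ultimately show ?thesis using le Phi_sym[of t] by linarith
qed

lemma Phi_nonneg: "0 \<le> Phi x"
  unfolding Phi_def by (rule finite_borel_measure.cdf_nonneg[OF real_distribution.finite_borel_measure_M[OF NN_rd]])

lemma Phi_le1: "Phi x \<le> 1"
  unfolding Phi_def by (rule real_distribution.cdf_bounded_prob[OF NN_rd])

theorem theorem2:
  fixes M :: "'a measure" and X :: "'a \<Rightarrow> real" and p q :: real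
  assumes "prob_space M"
    and "X \<in> borel_measurable M"
    and "0 < p" and "p < 1" and "q = 1 - p"
    and "measure M {\<omega> \<in> space M. X \<omega> = sqrt (q / p)} = p"
    and "measure M {\<omega> \<in> space M. X \<omega> = - sqrt (p / q)} = q"
  shows "(SUP x::real. \<bar>measure M {\<omega> \<in> space M. X \<omega> < x} - Phi x\<bar>) =
           (if p < 1/2 then Phi (sqrt (p / q)) - p else Phi (sqrt (q / p)) - q)"
proof -
  interpret P: prob_space M by (rule assms(1))
  have Xm[measurable]: "X \<in> borel_measurable M" by (rule assms(2))
  define a where "a = sqrt (q/p)"
  define b where "b = sqrt (p/q)"
  have p0: "0 < p" and q0: "0 < q" using assms by auto
  have a0: "0 < a" unfolding a_def using p0 q0 by simp
  have b0: "0 < b" unfolding b_def using p0 q0 by simp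
  have a2: "a\<^sup>2 = q/p" unfolding a_def using p0 q0 by simp
  have b2: "b\<^sup>2 = p/q" unfolding b_def using p0 q0 by simp
  have ab: "a * b = 1" unfolding a_def b_def using p0 q0
    by (simp add: real_sqrt_mult[symmetric])
  have ainv: "a = 1/b" using ab b0 by (simp add: field_simps)
  have binv: "b = 1/a" using ab a0 by (simp add: field_simps)
  have pq1: "p + q = 1" using assms by simp
  have qb1: "q * (1 + b\<^sup>2) = 1" using b2 pq1 q0 by (simp add: field_simps)
  have pa1: "p * (1 + a\<^sup>2) = 1" using a2 pq1 p0 by (simp add: field_simps)
  have bpos: "0 < 1 + b\<^sup>2" and apos: "0 < 1 + a\<^sup>2" by (simp_all add: add_pos_nonneg)
  have qb: "q = 1/(1+b\<^sup>2)" using qb1 bpos by (simp add: field_simps)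
  have "p = q * b\<^sup>2" using b2 q0 by (simp add: field_simps)
  then have pb: "p = b\<^sup>2/(1+b\<^sup>2)" using qb by simp
  have pa: "p = 1/(1+a\<^sup>2)" using pa1 apos by (simp add: field_simps)
  have "q = p * a\<^sup>2" using a2 p0 by (simp add: field_simps)
  then have qa: "q = a\<^sup>2/(1+a\<^sup>2)" using pa by simp
  define A where "A = {\<omega> \<in> space M. X \<omega> = a}"
  define B where "B = {\<omega> \<in> space M. X \<omega> = -b}"
  have AM: "A \<in> P.events" unfolding A_def by measurable
  have BM: "B \<in> P.events" unfolding B_def by measurable
  have mA: "P.prob A = p" using assms(6) unfolding A_def a_def .
  have mB: "P.prob B = q" using assms(7) unfolding B_def b_def .
  have disj: "A \<inter> B = {}" unfolding A_def B_def using a0 b0 by auto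
  have mAB: "P.prob (A \<union> B) = 1" using P.finite_measure_Union[OF AM BM disj] mA mB pq1 by simp
  define N where "N = space M - (A \<union> B)"
  have NM: "N \<in> P.events" unfolding N_def using AM BM by auto
  have "P.prob N = 0" unfolding N_def using P.prob_compl[of "A \<union> B"] AM BM mAB by simp
  then have "emeasure M N = 0" using P.emeasure_eq_measure[of N] by simp
  then have Nnull: "N \<in> null_sets M" using NM by (intro null_setsI)
  define F where "F x = measure M {\<omega> \<in> space M. X \<omega> < x}" for x
  have Fx: "F x = (if -b < x then q else 0) + (if a < x then p else 0)" for x
  proof -
    define S where "S = {\<omega> \<in> space M. X \<omega> < x}"
    have SM: "S \<in> P.events" unfolding S_def by measurable
    have "F x = P.prob (S - N)" unfolding F_def S_def[symmetric]
      using measure_Diff_null_set[OF SM Nnull] by simp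
    also have "S - N = (S \<inter> A) \<union> (S \<inter> B)" unfolding N_def S_def by auto
    also have "P.prob \<dots> = P.prob (S \<inter> A) + P.prob (S \<inter> B)"
      using SM AM BM disj by (intro P.finite_measure_Union) auto
    also have "S \<inter> A = (if a < x then A else {})" unfolding S_def A_def by auto
    also have "S \<inter> B = (if -b < x then B else {})" unfolding S_def B_def by auto
    finally show ?thesis using mA mB by simp
  qed
  define g where "g x = \<bar>F x - Phi x\<bar>" for x
  define V where "V = (if p < 1/2 then Phi b - p else Phi a - q)"
  have sym: "Phi (-b) = 1 - Phi b" by (rule Phi_sym)
  have ineqs: "(p < 1/2 \<longrightarrow> Phi a - Phi b \<le> q - p \<and> p \<le> 2 * Phi b - 1 \<and> b \<le> a) \<and>
               (\<not> p < 1/2 \<longrightarrow> Phi b - Phi a \<le> p - q \<and> q \<le> 2 * Phi a - 1 \<and> a \<le> b)"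
  proof (intro conjI impI)
    assume h: "p < 1/2"
    have "p/q \<le> 1" using h pq1 q0 by (simp add: field_simps)
    then have b1: "b \<le> 1" unfolding b_def by simp
    show "Phi a - Phi b \<le> q - p" using L1[OF b0 b1] ainv pb qb by (simp add: diff_divide_distrib)
    show "p \<le> 2 * Phi b - 1" using L2[OF b0 b1] pb by simp
    have "b * b \<le> 1" using b1 b0 by (simp add: mult_le_one)
    then have "b * b \<le> a * b" using ab by simp
    then show "b \<le> a" using b0 by simp
  next
    assume h: "\<not> p < 1/2"
    have "q/p \<le> 1" using h pq1 p0 by (simp add: field_simps)
    then have a1: "a \<le> 1" unfolding a_def by simp
    show "Phi b - Phi a \<le> p - q" using L1[OF a0 a1] binv pa qa by (simp add: diff_divide_distrib)
    show "q \<le> 2 * Phi a - 1" using L2[OF a0 a1] qa by simp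
    have "a * a \<le> 1" using a1 a0 by (simp add: mult_le_one)
    then have "a * a \<le> a * b" using ab by simp
    then show "a \<le> b" using a0 by simp
  qed
  have bound: "g x \<le> V" for x
  proof -
    have m1: "Phi x \<le> Phi (-b)" if "x \<le> -b" using Phi_mono that by simp
    have m2: "Phi (-b) \<le> Phi x" if "-b \<le> x" using Phi_mono that by simp
    have m3: "Phi x \<le> Phi a" if "x \<le> a" using Phi_mono that by simp
    have m4: "Phi a \<le> Phi x" if "a \<le> x" using Phi_mono that by simp
    have m5: "Phi b \<le> Phi a" if "b \<le> a" using Phi_mono that by simp
    have m6: "Phi a \<le> Phi b" if "a \<le> b" using Phi_mono that by simp
    have ab': "-b < a" using a0 b0 by simp
    show ?thesis unfolding g_def V_def Fx
      using ineqs m1 m2 m3 m4 m5 m6 ab' sym Phi_nonneg[of x] Phi_le1[of x] pq1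
      by (cases "x \<le> -b"; cases "x \<le> a"; cases "p < 1/2") (auto simp: abs_if split: if_splits)
  qed
  have least: "V \<le> y" if ub: "\<And>x. g x \<le> y" for y
  proof (cases "p < 1/2")
    case False
    have "Phi a - q \<le> g a" unfolding g_def Fx using a0 b0 by auto
    then show ?thesis using ub[of a] False unfolding V_def by simp
  next
    case True
    have "((\<lambda>x. q - Phi x) \<longlongrightarrow> q - Phi (-b)) (at_right (-b))"
    proof -
      have "(Phi \<longlongrightarrow> Phi (-b)) (at (-b))" using Phi_isCont[of "-b"] by (simp add: isCont_def)
      then have "(Phi \<longlongrightarrow> Phi (-b)) (at_right (-b))" by (rule tendsto_mono[OF at_le, rotated]) simp
      then show ?thesis by (intro tendsto_diff tendsto_const)
    qed
    moreover have "eventually (\<lambda>x. q - Phi x \<le> y) (at_right (-b))"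
    proof -
      have "eventually (\<lambda>x. x \<in> {-b<..<a}) (at_right (-b))"
        by (rule eventually_at_right_real) (use a0 b0 in simp)
      then show ?thesis
      proof (rule eventually_mono)
        fix x assume "x \<in> {-b<..<a}"
        then have "F x = q" unfolding Fx by auto
        then have "q - Phi x \<le> g x" unfolding g_def by simp
        then show "q - Phi x \<le> y" using ub[of x] by simp
      qed
    qed
    ultimately have "q - Phi (-b) \<le> y" by (rule tendsto_upperbound[OF _ _ trivial_limit_at_right_real])
    then show ?thesis using True sym pq1 unfolding V_def by simp
  qed
  have "(SUP x. g x) = V"
  proof (rule cSup_eq_non_empty)
    show "range g \<noteq> {}" by simp
    show "\<And>x. x \<in> range g \<Longrightarrow> x \<le> V" using bound by auto
    fix y assume "\<And>x. x \<in> range g \<Longrightarrow> x \<le> y"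
    then show "V \<le> y" by (intro least) auto
  qed
  then show ?thesis unfolding g_def F_def V_def a_def b_def .
qed

end
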